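(* Let $p\in k^\times$, $A_p=k\langle x_1,x_2\rangle/(x_2x_1-px_1x_2)$, and $K$ a Hopf algebra with bijective antipode $S$ such that $A_p$ is a right $K$-comodule algebra via $\rho(x_i)=x_1\otimes y_{1i}+x_2\otimes y_{2i}$, with homological codeterminant ${\sf D}$. Then $$S(y_{11})=y_{22}{\sf D}^{-1},\quad S(y_{12})=-p\,y_{12}{\sf D}^{-1},\quad S(y_{21})=-p^{-1}y_{21}{\sf D}^{-1},\quad S(y_{22})=y_{11}{\sf D}^{-1}.$$
   Context: The Ext-algebra of $A_p$ is $E=k\langle x_1^*,x_2^*\rangle/(x_2^*x_1^*+p^{-1}x_1^*x_2^*,(x_1^* )^2,(x_2^* )^2)$, a left $K$-comodule algebra via $\rho^!(x_i^* )=\sum_{s=1}^2y_{is}\otimes x_s^*$. The homological codeterminant is the grouplike ${\sf D}\in K$ with $\rho^!(x_1^*x_2^* )={\sf D}\otimes x_1^*x_2^*$. *)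

theory Defs
  imports Complex_Main
begin

definition k_algebra :: "('k::field \<Rightarrow> 'a::ring_1 \<Rightarrow> 'a) \<Rightarrow> bool" where
  "k_algebra sc \<longleftrightarrow> Vector_Spaces.vector_space sc \<and>
     (\<forall>c x y. sc c (x * y) = sc c x * y \<and> sc c (x * y) = x * sc c y)"

text \<open>Elements of K (x) K (resp. K (x) K (x) K) are represented by finite lists of
  simple tensors; two representatives denote the same tensor iff all products of
  linear functionals agree on them (over a field, linear functionals separate tensors).\<close>
definition teq2 :: "('k::field \<Rightarrow> 'a::ring_1 \<Rightarrow> 'a) \<Rightarrow> ('a \<times> 'a) list \<Rightarrow> ('a \<times> 'a) list \<Rightarrow> bool" where
  "teq2 sc t u \<longleftrightarrow> (\<forall>f g. Vector_Spaces.linear sc (*) f \<longrightarrow> Vector_Spaces.linear sc (*) g \<longrightarrow>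
      (\<Sum>(a,b)\<leftarrow>t. f a * g b) = (\<Sum>(a,b)\<leftarrow>u. f a * g b))"

definition teq3 :: "('k::field \<Rightarrow> 'a::ring_1 \<Rightarrow> 'a) \<Rightarrow> ('a \<times> 'a \<times> 'a) list \<Rightarrow> ('a \<times> 'a \<times> 'a) list \<Rightarrow> bool" where
  "teq3 sc t u \<longleftrightarrow> (\<forall>f g h. Vector_Spaces.linear sc (*) f \<longrightarrow> Vector_Spaces.linear sc (*) g \<longrightarrow>
      Vector_Spaces.linear sc (*) h \<longrightarrow>
      (\<Sum>(a,b,c)\<leftarrow>t. f a * g b * h c) = (\<Sum>(a,b,c)\<leftarrow>u. f a * g b * h c))"

definition hopf_algebra ::
  "('k::field \<Rightarrow> 'a::ring_1 \<Rightarrow> 'a) \<Rightarrow> ('a \<Rightarrow> ('a \<times> 'a) list) \<Rightarrow> ('a \<Rightarrow> 'k) \<Rightarrow> ('a \<Rightarrow> 'a) \<Rightarrow> bool" where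
  "hopf_algebra sc Delta eps S \<longleftrightarrow>
     k_algebra sc \<and>
     \<comment> \<open>Delta is k-linear\<close>
     (\<forall>x y. teq2 sc (Delta (x + y)) (Delta x @ Delta y)) \<and>
     (\<forall>c x. teq2 sc (Delta (sc c x)) (map (\<lambda>(a,b). (sc c a, b)) (Delta x))) \<and>
     \<comment> \<open>Delta is an algebra map\<close>
     (\<forall>x y. teq2 sc (Delta (x * y)) [(a * c, b * d). (a,b) \<leftarrow> Delta x, (c,d) \<leftarrow> Delta y]) \<and>
     teq2 sc (Delta 1) [(1, 1)] \<and>
     \<comment> \<open>coassociativity\<close>
     (\<forall>x. teq3 sc [(a1, a2, b). (a,b) \<leftarrow> Delta x, (a1,a2) \<leftarrow> Delta a]
                  [(a, b1, b2). (a,b) \<leftarrow> Delta x, (b1,b2) \<leftarrow> Delta b]) \<and>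
     \<comment> \<open>counit: a k-linear algebra map satisfying the counit laws\<close>
     Vector_Spaces.linear sc (*) eps \<and>
     (\<forall>x y. eps (x * y) = eps x * eps y) \<and> eps 1 = 1 \<and>
     (\<forall>x. (\<Sum>(a,b)\<leftarrow>Delta x. sc (eps a) b) = x) \<and>
     (\<forall>x. (\<Sum>(a,b)\<leftarrow>Delta x. sc (eps b) a) = x) \<and>
     \<comment> \<open>antipode\<close>
     Vector_Spaces.linear sc sc S \<and>
     (\<forall>x. (\<Sum>(a,b)\<leftarrow>Delta x. S a * b) = sc (eps x) 1) \<and>
     (\<forall>x. (\<Sum>(a,b)\<leftarrow>Delta x. a * S b) = sc (eps x) 1)"

text \<open>An element of (A (x) K) or (K (x) A), where A has PBW basis x1^a x2^b with
  x2 x1 = q x1 x2, is a function F with F a b the K-coefficient of x1^a x2^b.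
  If ext is True, additionally x1^2 = x2^2 = 0 (exponents > 1 vanish).
  Multiplication: (x1^a1 x2^b1 (x) u)(x1^a2 x2^b2 (x) v) = q^(b1 a2) x1^(a1+a2) x2^(b1+b2) (x) uv.\<close>
definition qmul :: "('k::field \<Rightarrow> 'a::ring_1 \<Rightarrow> 'a) \<Rightarrow> 'k \<Rightarrow> bool \<Rightarrow>
    (nat \<Rightarrow> nat \<Rightarrow> 'a) \<Rightarrow> (nat \<Rightarrow> nat \<Rightarrow> 'a) \<Rightarrow> (nat \<Rightarrow> nat \<Rightarrow> 'a)" where
  "qmul sc q ext F G = (\<lambda>a b. if ext \<and> (a > 1 \<or> b > 1) then 0 else
     (\<Sum>a1\<le>a. \<Sum>b1\<le>b. sc (q ^ (b1 * (a - a1))) (F a1 b1 * G (a - a1) (b - b1))))"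

definition lin2 :: "'a::zero \<Rightarrow> 'a \<Rightarrow> (nat \<Rightarrow> nat \<Rightarrow> 'a)" where
  "lin2 u1 u2 = (\<lambda>a b. if (a, b) = (1, 0) then u1 else if (a, b) = (0, 1) then u2 else 0)"

definition rho_gen :: "(nat \<Rightarrow> nat \<Rightarrow> 'a::zero) \<Rightarrow> nat \<Rightarrow> (nat \<Rightarrow> nat \<Rightarrow> 'a)" where
  "rho_gen y i = lin2 (y 1 i) (y 2 i)"

definition rhoE_gen :: "(nat \<Rightarrow> nat \<Rightarrow> 'a::zero) \<Rightarrow> nat \<Rightarrow> (nat \<Rightarrow> nat \<Rightarrow> 'a)" where
  "rhoE_gen y i = lin2 (y i 1) (y i 2)"

text \<open>Comodule axioms on the generators x1, x2 (equivalently x_1^*, x_2^* ):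
  coassociativity gives Delta(y_ij) = sum_s y_is (x) y_sj and the counit axiom gives
  eps(y_ij) = delta_ij.  Since both sides of each comodule axiom are algebra maps,
  checking them on generators suffices.\<close>
definition comod_gens ::
  "('k::field \<Rightarrow> 'a::ring_1 \<Rightarrow> 'a) \<Rightarrow> ('a \<Rightarrow> ('a \<times> 'a) list) \<Rightarrow> ('a \<Rightarrow> 'k) \<Rightarrow> (nat \<Rightarrow> nat \<Rightarrow> 'a) \<Rightarrow> bool" where
  "comod_gens sc Delta eps y \<longleftrightarrow>
     (\<forall>i\<in>{1,2}. \<forall>j\<in>{1,2}. teq2 sc (Delta (y i j)) [(y i 1, y 1 j), (y i 2, y 2 j)] \<and>
                          eps (y i j) = (if i = j then 1 else 0))"

text \<open>A_p = k<x1,x2>/(x2 x1 - p x1 x2) is a right K-comodule algebra via rho: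
  rho extends to an algebra map A_p -> A_p (x) K (i.e. the defining relation is respected
  in A_p (x) K) and the comodule axioms hold.\<close>
definition Ap_right_comodule_algebra ::
  "('k::field \<Rightarrow> 'a::ring_1 \<Rightarrow> 'a) \<Rightarrow> ('a \<Rightarrow> ('a \<times> 'a) list) \<Rightarrow> ('a \<Rightarrow> 'k) \<Rightarrow> 'k \<Rightarrow> (nat \<Rightarrow> nat \<Rightarrow> 'a) \<Rightarrow> bool" where
  "Ap_right_comodule_algebra sc Delta eps p y \<longleftrightarrow>
     qmul sc p False (rho_gen y 2) (rho_gen y 1)
       = (\<lambda>a b. sc p (qmul sc p False (rho_gen y 1) (rho_gen y 2) a b)) \<and>
     comod_gens sc Delta eps y"

text \<open>E = k<x1^*,x2^*>/(x2^* x1^* + p^-1 x1^* x2^*, (x1^* )^2, (x2^* )^2) is a left K-comodule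
  algebra via rho^! (the relations (x_i^* )^2 = 0 are built into the model with ext = True).\<close>
definition E_left_comodule_algebra ::
  "('k::field \<Rightarrow> 'a::ring_1 \<Rightarrow> 'a) \<Rightarrow> ('a \<Rightarrow> ('a \<times> 'a) list) \<Rightarrow> ('a \<Rightarrow> 'k) \<Rightarrow> 'k \<Rightarrow> (nat \<Rightarrow> nat \<Rightarrow> 'a) \<Rightarrow> bool" where
  "E_left_comodule_algebra sc Delta eps p y \<longleftrightarrow>
     (let q = - inverse p in
       qmul sc q True (rhoE_gen y 1) (rhoE_gen y 1) = (\<lambda>a b. 0) \<and>
       qmul sc q True (rhoE_gen y 2) (rhoE_gen y 2) = (\<lambda>a b. 0) \<and>
       (\<lambda>a b. qmul sc q True (rhoE_gen y 2) (rhoE_gen y 1) a b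
              + sc (inverse p) (qmul sc q True (rhoE_gen y 1) (rhoE_gen y 2) a b)) = (\<lambda>a b. 0)) \<and>
     comod_gens sc Delta eps y"

text \<open>Homological codeterminant: rho^!(x1^* x2^* ) = rho^!(x1^* ) rho^!(x2^* ) = D (x) x1^* x2^*,
  i.e. D is the coefficient of x1^* x2^* in that product.\<close>
definition hom_codet :: "('k::field \<Rightarrow> 'a::ring_1 \<Rightarrow> 'a) \<Rightarrow> 'k \<Rightarrow> (nat \<Rightarrow> nat \<Rightarrow> 'a) \<Rightarrow> 'a" where
  "hom_codet sc p y = qmul sc (- inverse p) True (rhoE_gen y 1) (rhoE_gen y 2) 1 1"

end

theory Submission
  imports Defs
begin

lemma vs_field: "Vector_Spaces.vector_space ((*) :: 'k::field \<Rightarrow> 'k \<Rightarrow> 'k)"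
  by unfold_locales (simp_all add: algebra_simps)

lemma sum_list_sum_swap:
  "(\<Sum>x\<leftarrow>t. \<Sum>e\<in>E. f e x) = (\<Sum>e\<in>E. \<Sum>x\<leftarrow>t. f e x)"
  by (induction t) (simp_all add: sum.distrib)

lemma (in vector_space) sum_list_scale_left:
  "(\<Sum>x\<leftarrow>t. scale (c x) v) = scale (\<Sum>x\<leftarrow>t. c x) v"
  by (induction t) (simp_all add: scale_left_distrib)

lemma bilin_sum_left:
  assumes "Vector_Spaces.vector_space s2"
    and B1: "\<And>x y z. B (x+y) z = B x z + B y z"
    and B3: "\<And>c x z. B (sc c x) z = s2 c (B x z)"
  shows "finite E \<Longrightarrow> B (\<Sum>e\<in>E. sc (r e) e) z = (\<Sum>e\<in>E. s2 (r e) (B e z))"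
proof (induction E rule: finite_induct)
  case empty
  have "B 0 z = B 0 z + B 0 z" using B1[of 0 0 z] by simp
  then show ?case by simp
next
  case (insert x F)
  then show ?case by (simp add: B1 B3)
qed

lemma bilin_sum_right:
  assumes "Vector_Spaces.vector_space s2"
    and B1: "\<And>x y z. B z (x+y) = B z x + B z y"
    and B3: "\<And>c x z. B z (sc c x) = s2 c (B z x)"
  shows "finite E \<Longrightarrow> B z (\<Sum>e\<in>E. sc (r e) e) = (\<Sum>e\<in>E. s2 (r e) (B z e))"
proof (induction E rule: finite_induct)
  case empty
  have "B z 0 = B z 0 + B z 0" using B1[of z 0 0] by simp
  then show ?case by simp
next
  case (insert x F)
  then show ?case by (simp add: B1 B3)
qed

lemma bilin_expand:
  assumes vs2: "Vector_Spaces.vector_space s2"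
    and B1: "\<And>x y z. B (x+y) z = B x z + B y z" and B2: "\<And>x y z. B z (x+y) = B z x + B z y"
    and B3: "\<And>c x z. B (sc c x) z = s2 c (B x z)" and B4: "\<And>c x z. B z (sc c x) = s2 c (B z x)"
    and finB: "finite Bs"
    and a: "a = (\<Sum>e\<in>Bs. sc (r e) e)" and b: "b = (\<Sum>e\<in>Bs. sc (r' e) e)"
  shows "B a b = (\<Sum>e\<in>Bs. \<Sum>e'\<in>Bs. s2 (r e * r' e') (B e e'))"
proof -
  interpret W: vector_space s2 by (rule vs2)
  have "B a b = (\<Sum>e\<in>Bs. s2 (r e) (B e b))"
    unfolding a by (rule bilin_sum_left) (fact vs2 B1 B3 finB)+
  also have "\<dots> = (\<Sum>e\<in>Bs. s2 (r e) (\<Sum>e'\<in>Bs. s2 (r' e') (B e e')))"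
    unfolding b by (intro sum.cong refl arg_cong[where f="s2 _"] bilin_sum_right) (simp_all add: vs2 B2 B4 finB)
  also have "\<dots> = (\<Sum>e\<in>Bs. \<Sum>e'\<in>Bs. s2 (r e * r' e') (B e e'))"
    by (simp add: W.scale_sum_right)
  finally show ?thesis .
qed

lemma teq2_bilinear:
  fixes sc :: "'k::field \<Rightarrow> 'a::ring_1 \<Rightarrow> 'a" and s2 :: "'k \<Rightarrow> 'v::ab_group_add \<Rightarrow> 'v"
    and B :: "'a \<Rightarrow> 'a \<Rightarrow> 'v"
  assumes vs: "Vector_Spaces.vector_space sc" and vs2: "Vector_Spaces.vector_space s2"
    and B1: "\<And>x y z. B (x+y) z = B x z + B y z" and B2: "\<And>x y z. B z (x+y) = B z x + B z y"
    and B3: "\<And>c x z. B (sc c x) z = s2 c (B x z)" and B4: "\<And>c x z. B z (sc c x) = s2 c (B z x)"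
    and teq: "teq2 sc t u"
  shows "(\<Sum>(a,b)\<leftarrow>t. B a b) = (\<Sum>(a,b)\<leftarrow>u. B a b)"
proof -
  interpret V: vector_space sc by (rule vs)
  interpret W: vector_space s2 by (rule vs2)
  interpret VP: vector_space_pair sc "(*) :: 'k \<Rightarrow> 'k \<Rightarrow> 'k"
    by (unfold_locales) (simp_all add: algebra_simps)
  define F where "F = fst ` set t \<union> snd ` set t \<union> fst ` set u \<union> snd ` set u"
  have finF: "finite F" unfolding F_def by simp
  obtain Bs where Bs: "Bs \<subseteq> F" "V.independent Bs" "F \<subseteq> V.span Bs"
    by (rule V.basis_exists[of F]) auto
  have finB: "finite Bs" using Bs(1) finF finite_subset by blast
  have "\<forall>e. \<exists>g. Vector_Spaces.linear sc (*) g \<and> (\<forall>x\<in>Bs. g x = (if x = e then 1 else 0))"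
    using VP.linear_independent_extend[OF Bs(2)] by (rule allI)
  then obtain g where g: "\<And>e. Vector_Spaces.linear sc (*) (g e)"
    "\<And>e x. x \<in> Bs \<Longrightarrow> g e x = (if x = e then 1 else 0)"
    by metis
  have rep: "x = (\<Sum>e\<in>Bs. sc (g e x) e)" if "x \<in> V.span Bs" for x
    using that
  proof (induction rule: V.span_induct_alt)
    case base
    have "g e 0 = 0" for e using g(1)[of e] by (simp add: linear_iff_module_hom module_hom.zero)
    then show ?case by simp
  next
    case (step c x y)
    have lin: "g e (sc c x + y) = c * g e x + g e y" for e
      using g(1)[of e] by (simp add: linear_iff_module_hom module_hom.add module_hom.scale)
    have "(\<Sum>e\<in>Bs. sc (g e (sc c x + y)) e) = (\<Sum>e\<in>Bs. sc (c * g e x) e) + (\<Sum>e\<in>Bs. sc (g e y) e)"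
      by (simp add: lin V.scale_left_distrib sum.distrib)
    also have "(\<Sum>e\<in>Bs. sc (c * g e x) e) = (\<Sum>e\<in>Bs. if e = x then sc c e else 0)"
      using step.hyps by (intro sum.cong) (auto simp: g(2))
    also have "\<dots> = sc c x" using step.hyps finB by simp
    finally show ?case using step.IH by simp
  qed
  have exp: "B a b = (\<Sum>e\<in>Bs. \<Sum>e'\<in>Bs. s2 (g e a * g e' b) (B e e'))"
    if "a \<in> F" "b \<in> F" for a b
  proof -
    have "a \<in> V.span Bs" "b \<in> V.span Bs" using that Bs(3) by auto
    then show ?thesis
      by (intro bilin_expand[where sc=sc]) (simp_all add: vs2 B1 B2 B3 B4 finB rep[symmetric])
  qed
  have main: "(\<Sum>(a,b)\<leftarrow>l. B a b) = (\<Sum>e\<in>Bs. \<Sum>e'\<in>Bs. s2 (\<Sum>(a,b)\<leftarrow>l. g e a * g e' b) (B e e'))"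
    if "set l \<subseteq> set t \<union> set u" for l
  proof -
    have "(\<Sum>(a,b)\<leftarrow>l. B a b) = (\<Sum>(a,b)\<leftarrow>l. \<Sum>e\<in>Bs. \<Sum>e'\<in>Bs. s2 (g e a * g e' b) (B e e'))"
    proof (rule arg_cong[where f=sum_list], rule map_cong[OF refl])
      fix x assume "x \<in> set l"
      then have "fst x \<in> F" "snd x \<in> F" using that unfolding F_def by force+
      then show "(case x of (a,b) \<Rightarrow> B a b) = (case x of (a,b) \<Rightarrow> \<Sum>e\<in>Bs. \<Sum>e'\<in>Bs. s2 (g e a * g e' b) (B e e'))"
        using exp by (cases x) auto
    qed
    also have "\<dots> = (\<Sum>e\<in>Bs. \<Sum>e'\<in>Bs. \<Sum>x\<leftarrow>l. s2 ((\<lambda>(a,b). g e a * g e' b) x) (B e e'))"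
      unfolding split_def by (simp only: sum_list_sum_swap)
    also have "\<dots> = (\<Sum>e\<in>Bs. \<Sum>e'\<in>Bs. s2 (\<Sum>(a,b)\<leftarrow>l. g e a * g e' b) (B e e'))"
      by (simp add: W.sum_list_scale_left)
    finally show ?thesis .
  qed
  have eq: "(\<Sum>(a,b)\<leftarrow>t. g e a * g e' b) = (\<Sum>(a,b)\<leftarrow>u. g e a * g e' b)" for e e'
    using teq[unfolded teq2_def, rule_format, OF g(1) g(1)] .
  show ?thesis using main[of t] main[of u] eq by simp
qed


definition bil :: "('k::field \<Rightarrow> 'a::ring_1 \<Rightarrow> 'a) \<Rightarrow> ('a \<Rightarrow> 'a \<Rightarrow> 'a) \<Rightarrow> bool" where
  "bil sc B \<longleftrightarrow> (\<forall>x y z. B (x+y) z = B x z + B y z) \<and> (\<forall>x y z. B z (x+y) = B z x + B z y) \<and>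
     (\<forall>c x z. B (sc c x) z = sc c (B x z)) \<and> (\<forall>c x z. B z (sc c x) = sc c (B z x))"

lemma bil_teq:
  assumes "Vector_Spaces.vector_space sc" "bil sc B" "teq2 sc t u"
  shows "(\<Sum>(a,b)\<leftarrow>t. B a b) = (\<Sum>(a,b)\<leftarrow>u. B a b)"
  using assms unfolding bil_def
  by (intro teq2_bilinear[of sc sc]) simp_all

lemma scale_sum_list:
  assumes "Vector_Spaces.vector_space sc"
  shows "sc c (\<Sum>x\<leftarrow>L. f x) = (\<Sum>x\<leftarrow>L. sc c (f x))"
proof -
  interpret V: vector_space sc by fact
  show ?thesis by (induction L) (simp_all add: V.scale_right_distrib)
qed

lemma ka_vs: "k_algebra sc \<Longrightarrow> Vector_Spaces.vector_space sc"
  unfolding k_algebra_def by simp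
lemma ka_left: "k_algebra sc \<Longrightarrow> sc c x * y = sc c (x*y)"
  unfolding k_algebra_def by metis
lemma ka_right: "k_algebra sc \<Longrightarrow> x * sc c y = sc c (x*y)"
  unfolding k_algebra_def by metis

lemma bil_mult:
  assumes "k_algebra sc" "bil sc B"
  shows "bil sc (\<lambda>c d. B (a*c) (b*d))"
  using assms unfolding bil_def
  by (simp add: distrib_left ka_right[OF assms(1)])

lemma bil_zero: assumes "Vector_Spaces.vector_space sc" shows "bil sc (\<lambda>a b. 0)"
proof -
  interpret V: vector_space sc by fact
  show ?thesis unfolding bil_def by simp
qed

lemma bil_add:
  assumes "Vector_Spaces.vector_space sc" "bil sc B1" "bil sc B2"
  shows "bil sc (\<lambda>a b. B1 a b + B2 a b)"
proof -
  interpret V: vector_space sc by fact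
  show ?thesis using assms unfolding bil_def by (simp add: V.scale_right_distrib algebra_simps)
qed

lemma bil_prod:
  assumes ka: "k_algebra sc" and b: "bil sc B"
  shows "bil sc (\<lambda>a b. \<Sum>(c,d)\<leftarrow>L. B (a*c) (b*d))"
proof (induction L)
  case Nil
  then show ?case using bil_zero[OF ka_vs[OF ka]] by simp
next
  case (Cons cd L)
  obtain c d where cd: "cd = (c,d)" by force
  have "bil sc (\<lambda>a b. B (a*c) (b*d))"
    using b ka unfolding bil_def by (simp add: distrib_right ka_left[OF ka])
  then show ?case using bil_add[OF ka_vs[OF ka] _ Cons.IH] cd by simp
qed


lemma hopf_ka: "hopf_algebra sc Delta eps S \<Longrightarrow> k_algebra sc"
  by (simp add: hopf_algebra_def)

lemma phi_add:
  assumes "hopf_algebra sc Delta eps S" "bil sc B"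
  shows "(\<Sum>(a,b)\<leftarrow>Delta (x+z). B a b) = (\<Sum>(a,b)\<leftarrow>Delta x. B a b) + (\<Sum>(a,b)\<leftarrow>Delta z. B a b)"
proof -
  have "teq2 sc (Delta (x + z)) (Delta x @ Delta z)" using assms(1) by (simp add: hopf_algebra_def)
  from bil_teq[OF ka_vs[OF hopf_ka[OF assms(1)]] assms(2) this] show ?thesis by simp
qed

lemma phi_scale:
  assumes "hopf_algebra sc Delta eps S" "bil sc B"
  shows "(\<Sum>(a,b)\<leftarrow>Delta (sc c x). B a b) = sc c (\<Sum>(a,b)\<leftarrow>Delta x. B a b)"
proof -
  have vs: "Vector_Spaces.vector_space sc" using ka_vs[OF hopf_ka[OF assms(1)]] .
  have "teq2 sc (Delta (sc c x)) (map (\<lambda>(a,b). (sc c a, b)) (Delta x))" using assms(1) by (simp add: hopf_algebra_def)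
  from bil_teq[OF vs assms(2) this]
  have "(\<Sum>(a,b)\<leftarrow>Delta (sc c x). B a b) = (\<Sum>(a,b)\<leftarrow>map (\<lambda>(a,b). (sc c a, b)) (Delta x). B a b)" .
  also have "\<dots> = (\<Sum>(a,b)\<leftarrow>Delta x. sc c (B a b))"
    using assms(2) unfolding bil_def by (simp add: o_def split_def)
  also have "\<dots> = sc c (\<Sum>(a,b)\<leftarrow>Delta x. B a b)"
    by (simp add: scale_sum_list[OF vs] split_def)
  finally show ?thesis .
qed

lemma phi_gen:
  assumes "hopf_algebra sc Delta eps S" "bil sc B" "comod_gens sc Delta eps y" "i \<in> {1,2}" "j \<in> {1,2}"
  shows "(\<Sum>(a,b)\<leftarrow>Delta (y i j). B a b) = B (y i 1) (y 1 j) + B (y i 2) (y 2 j)"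
proof -
  have "teq2 sc (Delta (y i j)) [(y i 1, y 1 j), (y i 2, y 2 j)]"
    using assms(3-5) unfolding comod_gens_def by blast
  from bil_teq[OF ka_vs[OF hopf_ka[OF assms(1)]] assms(2) this] show ?thesis by simp
qed

lemma sum_comp:
  "(\<Sum>(a,b)\<leftarrow>[(a * c, b * d). (a,b) \<leftarrow> L1, (c,d) \<leftarrow> L2]. B a b) = (\<Sum>(a,b)\<leftarrow>L1. \<Sum>(c,d)\<leftarrow>L2. B (a*c) (b*d))"
proof (induction L1)
  case Nil
  then show ?case by simp
next
  case (Cons ab L1)
  have inner: "(\<Sum>(a,b)\<leftarrow>[(fst ab * c, snd ab * d). (c,d) \<leftarrow> L2]. B a b) = (\<Sum>(c,d)\<leftarrow>L2. B (fst ab*c) (snd ab*d))"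
    by (induction L2) auto
  show ?case using Cons inner by (cases ab) simp
qed

lemma phi_mult:
  assumes "hopf_algebra sc Delta eps S" "bil sc B"
  shows "(\<Sum>(a,b)\<leftarrow>Delta (x*z). B a b) = (\<Sum>(a,b)\<leftarrow>Delta x. \<Sum>(c,d)\<leftarrow>Delta z. B (a*c) (b*d))"
proof -
  have "teq2 sc (Delta (x * z)) [(a * c, b * d). (a,b) \<leftarrow> Delta x, (c,d) \<leftarrow> Delta z]"
    using assms(1) by (simp add: hopf_algebra_def)
  from bil_teq[OF ka_vs[OF hopf_ka[OF assms(1)]] assms(2) this]
  have "(\<Sum>(a,b)\<leftarrow>Delta (x*z). B a b) = (\<Sum>(a,b)\<leftarrow>[(a * c, b * d). (a,b) \<leftarrow> Delta x, (c,d) \<leftarrow> Delta z]. B a b)" .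
  also have "\<dots> = (\<Sum>(a,b)\<leftarrow>Delta x. \<Sum>(c,d)\<leftarrow>Delta z. B (a*c) (b*d))"
    by (rule sum_comp)
  finally show ?thesis .
qed


lemma phi_mono:
  assumes hopf: "hopf_algebra sc Delta eps S" and bB: "bil sc B" and cg: "comod_gens sc Delta eps y"
    and ij: "i \<in> {1,2}" "j \<in> {1,2}" "k \<in> {1,2}" "l \<in> {1,2}"
  shows "(\<Sum>(a,b)\<leftarrow>Delta (y i j * y k l). B a b) =
     B (y i 1 * y k 1) (y 1 j * y 1 l) + B (y i 1 * y k 2) (y 1 j * y 2 l) +
     B (y i 2 * y k 1) (y 2 j * y 1 l) + B (y i 2 * y k 2) (y 2 j * y 2 l)"
proof -
  have ka: "k_algebra sc" using hopf_ka[OF hopf] .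
  have vs: "Vector_Spaces.vector_space sc" using ka_vs[OF ka] .
  have tx: "teq2 sc (Delta (y i j)) [(y i 1, y 1 j), (y i 2, y 2 j)]"
    using cg ij unfolding comod_gens_def by blast
  have tz: "teq2 sc (Delta (y k l)) [(y k 1, y 1 l), (y k 2, y 2 l)]"
    using cg ij unfolding comod_gens_def by blast
  have "(\<Sum>(a,b)\<leftarrow>Delta (y i j * y k l). B a b) = (\<Sum>(a,b)\<leftarrow>Delta (y i j). \<Sum>(c,d)\<leftarrow>Delta (y k l). B (a*c) (b*d))"
    by (rule phi_mult[OF hopf bB])
  also have "\<dots> = (\<Sum>(a,b)\<leftarrow>Delta (y i j). \<Sum>(c,d)\<leftarrow>[(y k 1, y 1 l), (y k 2, y 2 l)]. B (a*c) (b*d))"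
    apply (rule arg_cong[where f=sum_list], rule map_cong[OF refl], clarify)
    subgoal for a b using bil_teq[OF vs bil_mult[OF ka bB, of a b] tz] by simp
    done
  also have "\<dots> = (\<Sum>(a,b)\<leftarrow>[(y i 1, y 1 j), (y i 2, y 2 j)]. \<Sum>(c,d)\<leftarrow>[(y k 1, y 1 l), (y k 2, y 2 l)]. B (a*c) (b*d))"
    by (rule bil_teq[OF vs bil_prod[OF ka bB] tx])
  finally show ?thesis by (simp add: add.assoc)
qed


theorem lemma5p2:
  fixes sc :: "'k::field \<Rightarrow> 'a::ring_1 \<Rightarrow> 'a"
    and Delta :: "'a \<Rightarrow> ('a \<times> 'a) list" and eps :: "'a \<Rightarrow> 'k" and S :: "'a \<Rightarrow> 'a"
    and p :: 'k and y :: "nat \<Rightarrow> nat \<Rightarrow> 'a"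
  assumes "p \<noteq> 0"
    and "hopf_algebra sc Delta eps S"
    and "bij S"
    and "Ap_right_comodule_algebra sc Delta eps p y"
    and "E_left_comodule_algebra sc Delta eps p y"
  shows "\<exists>Dinv. hom_codet sc p y * Dinv = 1 \<and> Dinv * hom_codet sc p y = 1 \<and>
           S (y 1 1) = y 2 2 * Dinv \<and>
           S (y 1 2) = - sc p (y 1 2 * Dinv) \<and>
           S (y 2 1) = - sc (inverse p) (y 2 1 * Dinv) \<and>
           S (y 2 2) = y 1 1 * Dinv"
proof -
  note p0 = assms(1) and hopf = assms(2) and EL = assms(5)
  have ka: "k_algebra sc" using hopf_ka[OF hopf] .
  have vs: "Vector_Spaces.vector_space sc" using ka_vs[OF ka] .
  interpret V: vector_space sc by (rule vs)
  note kal = ka_left[OF ka] and kar = ka_right[OF ka]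
  have cg: "comod_gens sc Delta eps y" using EL unfolding E_left_comodule_algebra_def by simp
  define q where "q = - inverse p"
  have at1: "{..1::nat} = {0,1}" by auto
  have Dform: "hom_codet sc p y = y 1 1 * y 2 2 + sc q (y 1 2 * y 2 1)"
    unfolding hom_codet_def qmul_def rhoE_gen_def lin2_def q_def at1 by simp
  have EE: "qmul sc q True (rhoE_gen y 1) (rhoE_gen y 1) = (\<lambda>a b. 0)"
    "qmul sc q True (rhoE_gen y 2) (rhoE_gen y 2) = (\<lambda>a b. 0)"
    "(\<lambda>a b. qmul sc q True (rhoE_gen y 2) (rhoE_gen y 1) a b
              + sc (inverse p) (qmul sc q True (rhoE_gen y 1) (rhoE_gen y 2) a b)) = (\<lambda>a b. 0)"
    using EL unfolding E_left_comodule_algebra_def Let_def q_def by simp_all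
  have E1: "y 1 1 * y 1 2 + sc q (y 1 2 * y 1 1) = 0"
    using fun_cong[OF fun_cong[OF EE(1)], of 1 1] unfolding qmul_def rhoE_gen_def lin2_def at1
    by (simp add: add.commute)
  have E2: "y 2 1 * y 2 2 + sc q (y 2 2 * y 2 1) = 0"
    using fun_cong[OF fun_cong[OF EE(2)], of 1 1] unfolding qmul_def rhoE_gen_def lin2_def at1
    by (simp add: add.commute)
  have E3: "(y 2 1 * y 1 2 + sc q (y 2 2 * y 1 1)) + sc (inverse p) (y 1 1 * y 2 2 + sc q (y 1 2 * y 2 1)) = 0"
    using fun_cong[OF fun_cong[OF EE(3)], of 1 1] unfolding qmul_def rhoE_gen_def lin2_def at1
    by (simp add: add.commute)
  have Slin: "Vector_Spaces.linear sc sc S" using hopf by (simp add: hopf_algebra_def)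
  have S_add: "S (x + z) = S x + S z" for x z
    using Slin by (simp add: linear_iff_module_hom module_hom.add)
  have S_scale: "S (sc c x) = sc c (S x)" for c x
    using Slin by (simp add: linear_iff_module_hom module_hom.scale)
  have bS: "bil sc (\<lambda>a b. S a * b)" unfolding bil_def
    by (simp add: S_add S_scale distrib_left distrib_right kal kar)
  have bS': "bil sc (\<lambda>a b. a * S b)" unfolding bil_def
    by (simp add: S_add S_scale distrib_left distrib_right kal kar)
  have anti1: "(\<Sum>(a,b)\<leftarrow>Delta x. S a * b) = sc (eps x) 1" for x
    using hopf by (simp add: hopf_algebra_def)
  have anti2: "(\<Sum>(a,b)\<leftarrow>Delta x. a * S b) = sc (eps x) 1" for x
    using hopf by (simp add: hopf_algebra_def)
  have epsy: "eps (y i j) = (if i = j then 1 else 0)" if "i \<in> {1,2}" "j \<in> {1,2}" for i j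
    using cg that unfolding comod_gens_def by blast
  have A: "S (y i 1) * y 1 j + S (y i 2) * y 2 j = (if i = j then 1 else 0)" if "i \<in> {1,2}" "j \<in> {1,2}" for i j
    using anti1[of "y i j"] phi_gen[OF hopf bS cg that] epsy[OF that] by auto
  define D where "D = hom_codet sc p y"
  have E3': "y 2 1 * y 1 2 + sc q (y 2 2 * y 1 1) = sc q D"
  proof -
    have "y 2 1 * y 1 2 + sc q (y 2 2 * y 1 1) = - sc (inverse p) D"
      using E3 unfolding D_def Dform by (simp add: add_eq_0_iff2)
    then show ?thesis unfolding q_def by simp
  qed
  have phiD: "(\<Sum>(a,b)\<leftarrow>Delta D. B a b) = B D D" if bB: "bil sc B" for B
  proof -
    have B1: "\<And>x y z. B (x+y) z = B x z + B y z" and B2: "\<And>x y z. B z (x+y) = B z x + B z y"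
      and B3: "\<And>c x z. B (sc c x) z = sc c (B x z)" and B4: "\<And>c x z. B z (sc c x) = sc c (B z x)"
      using bB unfolding bil_def by blast+
    have B0: "B x 0 = 0" for x using B2[of x 0 0] by simp
    have "(\<Sum>(a,b)\<leftarrow>Delta D. B a b) = (\<Sum>(a,b)\<leftarrow>Delta (y 1 1 * y 2 2). B a b) + sc q (\<Sum>(a,b)\<leftarrow>Delta (y 1 2 * y 2 1). B a b)"
      unfolding D_def Dform by (simp add: phi_add[OF hopf bB] phi_scale[OF hopf bB])
    also have "\<dots> = B (y 1 1 * y 2 1) (y 1 1 * y 1 2 + sc q (y 1 2 * y 1 1)) + B (y 1 1 * y 2 2) (y 1 1 * y 2 2 + sc q (y 1 2 * y 2 1))
        + B (y 1 2 * y 2 1) (y 2 1 * y 1 2 + sc q (y 2 2 * y 1 1)) + B (y 1 2 * y 2 2) (y 2 1 * y 2 2 + sc q (y 2 2 * y 2 1))"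
      by (simp add: phi_mono[OF hopf bB cg] B2 B4 V.scale_right_distrib algebra_simps)
    also have "\<dots> = B (y 1 1 * y 2 2) D + sc q (B (y 1 2 * y 2 1) D)"
      unfolding E1 E2 E3' B0 B4 unfolding D_def Dform by simp
    also have "\<dots> = B D D" unfolding D_def Dform by (simp add: B1 B3)
    finally show ?thesis .
  qed
  have epslin: "Vector_Spaces.linear sc (*) eps" using hopf by (simp add: hopf_algebra_def)
  have eps_add: "eps (x + z) = eps x + eps z" for x z
    using epslin by (simp add: linear_iff_module_hom module_hom.add)
  have eps_scale: "eps (sc c x) = c * eps x" for c x
    using epslin by (simp add: linear_iff_module_hom module_hom.scale)
  have eps_mult: "eps (x * z) = eps x * eps z" for x z
    using hopf by (simp add: hopf_algebra_def)
  have epsD: "eps D = 1"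
    unfolding D_def Dform by (simp add: eps_add eps_scale eps_mult epsy)
  have SDD: "S D * D = 1" using anti1[of D] phiD[OF bS] epsD by simp
  have DSD: "D * S D = 1" using anti2[of D] phiD[OF bS'] epsD by simp
  have pq': "p * q = -1" unfolding q_def using p0 by simp
  have pq: "sc p (sc q x) = - x" for x
    unfolding q_def using p0 by simp
  have A11: "S (y 1 1) * y 1 1 + S (y 1 2) * y 2 1 = 1" using A[of 1 1] by simp
  have A12: "S (y 1 1) * y 1 2 + S (y 1 2) * y 2 2 = 0" using A[of 1 2] by simp
  have A21: "S (y 2 1) * y 1 1 + S (y 2 2) * y 2 1 = 0" using A[of 2 1] by simp
  have A22: "S (y 2 1) * y 1 2 + S (y 2 2) * y 2 2 = 1" using A[of 2 2] by simp
  have M11: "S (y 1 1) * D = y 2 2"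
  proof -
    have "S (y 1 1) * D = (S (y 1 1) * y 1 1 + S (y 1 2) * y 2 1) * y 2 2 + (S (y 1 1) * y 1 2 + S (y 1 2) * y 2 2) * sc q (y 2 1)
       - S (y 1 2) * (y 2 1 * y 2 2 + sc q (y 2 2 * y 2 1))"
      unfolding D_def Dform by (simp add: algebra_simps kal kar V.scale_right_distrib)
    then show ?thesis unfolding A11 A12 E2 by simp
  qed
  have M21: "S (y 2 1) * D = sc q (y 2 1)"
  proof -
    have "S (y 2 1) * D = (S (y 2 1) * y 1 1 + S (y 2 2) * y 2 1) * y 2 2 + (S (y 2 1) * y 1 2 + S (y 2 2) * y 2 2) * sc q (y 2 1)
       - S (y 2 2) * (y 2 1 * y 2 2 + sc q (y 2 2 * y 2 1))"
      unfolding D_def Dform by (simp add: algebra_simps kal kar V.scale_right_distrib)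
    then show ?thesis unfolding A21 A22 E2 by simp
  qed
  have M12: "S (y 1 2) * D = - sc p (y 1 2)"
  proof -
    have "(S (y 1 1) * y 1 1 + S (y 1 2) * y 2 1) * (- sc p (y 1 2)) + (S (y 1 1) * y 1 2 + S (y 1 2) * y 2 2) * y 1 1
       = S (y 1 1) * (- sc p (y 1 1 * y 1 2 + sc q (y 1 2 * y 1 1))) + S (y 1 2) * (- sc p (y 2 1 * y 1 2 + sc q (y 2 2 * y 1 1)))"
      by (simp add: algebra_simps kal kar V.scale_right_distrib pq pq')
    then show ?thesis unfolding A11 A12 E1 E3' by (simp add: pq pq')
  qed
  have M22: "S (y 2 2) * D = y 1 1"
  proof -
    have "(S (y 2 1) * y 1 1 + S (y 2 2) * y 2 1) * (- sc p (y 1 2)) + (S (y 2 1) * y 1 2 + S (y 2 2) * y 2 2) * y 1 1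
       = S (y 2 1) * (- sc p (y 1 1 * y 1 2 + sc q (y 1 2 * y 1 1))) + S (y 2 2) * (- sc p (y 2 1 * y 1 2 + sc q (y 2 2 * y 1 1)))"
      by (simp add: algebra_simps kal kar V.scale_right_distrib pq pq')
    then show ?thesis unfolding A21 A22 E1 E3' by (simp add: pq pq')
  qed
  have fin: "S x = S x * D * S D" for x using DSD by (simp add: mult.assoc)
  show ?thesis
  proof (intro exI[of _ "S D"] conjI)
    show "hom_codet sc p y * S D = 1" using DSD unfolding D_def .
    show "S D * hom_codet sc p y = 1" using SDD unfolding D_def .
    show "S (y 1 1) = y 2 2 * S D" using fin[of "y 1 1"] M11 by simp
    show "S (y 1 2) = - sc p (y 1 2 * S D)" using fin[of "y 1 2"] M12 by (simp add: kal)
    show "S (y 2 1) = - sc (inverse p) (y 2 1 * S D)" using fin[of "y 2 1"] M21 by (simp add: kal q_def)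
    show "S (y 2 2) = y 1 1 * S D" using fin[of "y 2 2"] M22 by simp
  qed
qed

end
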